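(* Consider the Ising model $H(\sigma)=-J\sum_{\langle x,y\rangle}\sigma(x)\sigma(y)$ on the Cayley tree $\tau^k$ with $\theta=\tanh(J\beta)$ and $\alpha=\frac{1-\theta}{1+\theta}$, and let $A\subset N_k=\{1,\dots,k+1\}$ with $|A|=k$. Suppose $k\ge 6$ and $\alpha>1$, and let $\alpha_{1,2}=\frac{k-1\pm\sqrt{k^2-6k+1}}{2}$. Then: 1) if $\alpha\in(\alpha_1,\alpha_2)$, there exist at least three $H_A$-weakly periodic Gibbs measures; 2) if $\alpha\notin(\alpha_1,\alpha_2)$, there exists at least one $H_A$-weakly periodic Gibbs measure.
   Context: $\tau^k=(V,L)$ is the Cayley tree of order $k\ge1$ (every vertex has $k+1$ neighbours). Its vertices are identified with the group $G_k$, the free product of $k+1$ cyclic groups of order two with generators $a_1,\dots,a_{k+1}$ ($a_i^2=e$), so that $x,y$ are neighbours iff $x=ya_i$ for some $i$; the root is $e$. For $x\in G_k$, $S(x)$ denotes the set of direct successors of $x$ (neighbours farther from $e$), and $x_\downarrow$ denotes the unique neighbour of $x$ not in $S(x)$. Spins take values $\sigma(x)\in\{-1,1\}$, $J\in\mathbb R$, $\beta=1/T>0$. Gibbs measures are constructed from boundary fields $h=\{h_x\in\mathbb R: x\in G_k\}$ via $\mu_n(\sigma_n)=Z_n^{-1}\exp\{-\beta H(\sigma_n)+\sum_{x\in W_n}h_x\sigma(x)\}$ on balls $V_n$ (with $W_n$ the sphere of radius $n$); these are consistent (and define a limiting Gibbs measure) iff $h_x=\sum_{y\in S(x)}f(h_y,\theta)$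 for all $x$, where $f(h,\theta)=\operatorname{arcth}(\theta\tanh h)$. Distinct such $h$ give distinct measures. For $\emptyset\ne A\subseteq N_k$, $H_A=\{x\in G_k:\sum_{i\in A}w_x(a_i)\text{ is even}\}$, where $w_x(a_i)$ is the number of letters $a_i$ in the (reduced) word $x$; it is a normal subgroup of index 2. A collection $h$ is $H_A$-weakly periodic if $h_x$ depends only on whether $x\in H_A$ and whether $x_\downarrow\in H_A$: $h_x=h_1$ if $x\in H_A,x_\downarrow\in H_A$; $h_2$ if $x\in H_A,x_\downarrow\notin H_A$; $h_3$ if $x\notin H_A,x_\downarrow\in H_A$; $h_4$ if $x\notin H_A,x_\downarrow\notin H_A$. A Gibbs measure is $H_A$-weakly periodic if it corresponds to such an $h$. For $|A|=k$ the consistency condition becomes the system $h_1=kf(h_3,\theta)$, $h_2=(k-1)f(h_3,\theta)+f(h_1,\theta)$, $h_3=(k-1)f(h_2,\theta)+f(h_4,\theta)$, $h_4=kf(h_2,\theta)$, and $H_A$-weakly periodic Gibbs measures correspond bijectively to its solutions $(h_1,h_2,h_3,h_4)\in\mathbb R^4$. *)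

theory Defs
  imports Complex_Main
begin

text \<open>Vertices of the Cayley tree of order k = elements of G_k = reduced words over the
generators a_1..a_{k+1} (a_i^2 = e).\<close>

definition cayley_vertices :: "nat \<Rightarrow> nat list set" where
  "cayley_vertices k = {x. set x \<subseteq> {1..k+1} \<and>
      (\<forall>j. Suc j < length x \<longrightarrow> x ! j \<noteq> x ! Suc j)}"

text \<open>Direct successors S(x): neighbours x a_i farther from the root, i.e. x with a letter
i appended, i different from the last letter of x.\<close>
definition successors :: "nat \<Rightarrow> nat list \<Rightarrow> nat list set" where
  "successors k x = {x @ [i] | i. i \<in> {1..k+1} \<and> (x = [] \<or> i \<noteq> last x)}"

text \<open>x_down: the unique neighbour of x (x \<noteq> e) that is not a successor.\<close>
definition pred_vertex :: "nat list \<Rightarrow> nat list" where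
  "pred_vertex x = butlast x"

definition letter_count :: "nat list \<Rightarrow> nat \<Rightarrow> nat" where
  "letter_count x i = count_list x i"

definition H_sub :: "nat \<Rightarrow> nat set \<Rightarrow> nat list set" where
  "H_sub k A = {x \<in> cayley_vertices k. even (\<Sum>i\<in>A. letter_count x i)}"

definition f_ising :: "real \<Rightarrow> real \<Rightarrow> real" where
  "f_ising h \<theta> = artanh (\<theta> * tanh h)"

definition consistent_field :: "nat \<Rightarrow> real \<Rightarrow> (nat list \<Rightarrow> real) \<Rightarrow> bool" where
  "consistent_field k \<theta> h \<longleftrightarrow>
     (\<forall>x \<in> cayley_vertices k. h x = (\<Sum>y\<in>successors k x. f_ising (h y) \<theta>))"

definition weakly_periodic :: "nat \<Rightarrow> nat set \<Rightarrow> (nat list \<Rightarrow> real) \<Rightarrow> bool" where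
  "weakly_periodic k A h \<longleftrightarrow>
     (\<exists>h1 h2 h3 h4. \<forall>x \<in> cayley_vertices k. x \<noteq> [] \<longrightarrow>
        h x = (if x \<in> H_sub k A then (if pred_vertex x \<in> H_sub k A then h1 else h2)
               else (if pred_vertex x \<in> H_sub k A then h3 else h4)))"

text \<open>Boundary fields of H_A-weakly periodic Gibbs measures (restricted to the vertex set;
distinct such fields give distinct Gibbs measures).\<close>
definition wp_gibbs_fields :: "nat \<Rightarrow> nat set \<Rightarrow> real \<Rightarrow> (nat list \<Rightarrow> real) set" where
  "wp_gibbs_fields k A \<theta> =
     {h. consistent_field k \<theta> h \<and> weakly_periodic k A h \<and>
         (\<forall>x. x \<notin> cayley_vertices k \<longrightarrow> h x = 0)}"

end

theory Submission
  imports Defs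
begin

lemma artanh_mono: "-1 < x \<Longrightarrow> x \<le> y \<Longrightarrow> y < 1 \<Longrightarrow> artanh x \<le> artanh (y::real)"
proof -
  assume a: "-1 < x" "x \<le> y" "y < 1"
  have "(1+x)*(1-y) \<le> (1+y)*(1-x)" using a by (simp add: algebra_simps)
  then have "(1+x)/(1-x) \<le> (1+y)/(1-y)" using a by (simp add: divide_simps)
  moreover have "0 < (1+x)/(1-x)" using a by simp
  ultimately show ?thesis unfolding artanh_def by simp
qed

lemma thtanh: "\<bar>\<theta>\<bar> < 1 \<Longrightarrow> \<bar>\<theta> * tanh (x::real)\<bar> < 1"
proof -
  assume "\<bar>\<theta>\<bar> < 1"
  moreover have "\<bar>tanh x\<bar> < 1" using tanh_real_bounds[of x] by auto
  ultimately show ?thesis using abs_mult_less[of \<theta> 1 "tanh x" 1] by (simp add: abs_mult)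
qed

lemma F_odd: "\<bar>\<theta>\<bar> < 1 \<Longrightarrow> f_ising (-h) \<theta> = - f_ising h \<theta>"
  unfolding f_ising_def using thtanh[of \<theta> h] by simp

lemma F_deriv: "\<bar>\<theta>\<bar> < 1 \<Longrightarrow> ((\<lambda>h. f_ising h \<theta>) has_field_derivative
   (\<theta> * (1 - tanh x ^ 2)) * (1 / (1 - (\<theta> * tanh x)^2))) (at x)"
proof -
  assume a: "\<bar>\<theta>\<bar> < 1"
  have "((\<lambda>h. \<theta> * tanh h) has_field_derivative \<theta> * (1 - tanh x^2)) (at x)"
    by (auto intro!: derivative_eq_intros)
  from DERIV_chain2[OF artanh_real_has_field_derivative[OF thtanh[OF a]] this]
  show ?thesis unfolding f_ising_def by (simp add: mult.commute)
qed

lemma F_cont: "\<bar>\<theta>\<bar> < 1 \<Longrightarrow> isCont (\<lambda>h. f_ising h \<theta>) x"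
  using F_deriv DERIV_isCont by blast

lemma fp_exists:
  fixes k :: nat and \<theta> :: real
  assumes "-1 < \<theta>" "\<theta> < 0" "-(real k - 1)*\<theta> - real k*\<theta>^2 > 1"
  shows "\<exists>h>0. h = -(real k - 1) * f_ising h \<theta> - f_ising (real k * f_ising h \<theta>) \<theta>"
proof -
  have ab: "\<bar>\<theta>\<bar> < 1" using assms by auto
  define F where "F h = f_ising h \<theta>" for h
  define \<phi> where "\<phi> h = -(real k - 1) * F h - F (real k * F h) - h" for h
  have F0: "F 0 = 0" unfolding F_def f_ising_def by simp
  have dF: "(F has_field_derivative (\<theta> * (1 - tanh x ^ 2)) * (1 / (1 - (\<theta> * tanh x)^2))) (at x)" for x
    unfolding F_def[abs_def] using F_deriv[OF ab] .
  have cF: "isCont F x" for x using dF DERIV_isCont by blast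
  have d\<phi>: "(\<phi> has_field_derivative (-(real k - 1)*\<theta> - real k*\<theta>^2 - 1)) (at 0)"
  proof -
    have d0: "(F has_field_derivative \<theta>) (at 0)" using dF[of 0] by simp
    have d1: "((\<lambda>z. F (real k * F z)) has_field_derivative \<theta> * (real k * \<theta>)) (at 0)"
      using DERIV_chain2[OF dF[of "real k * F 0"] DERIV_cmult[OF d0, of "real k"]] by (simp add: F0)
    have "(\<phi> has_field_derivative (-(real k - 1)*\<theta> - \<theta> * (real k * \<theta>) - 1)) (at 0)"
      unfolding \<phi>_def[abs_def]
      by (intro DERIV_diff DERIV_cmult d0 d1 DERIV_ident)
    then show ?thesis by (simp add: power2_eq_square algebra_simps)
  qed
  have c\<phi>: "isCont \<phi> x" for x
    unfolding \<phi>_def[abs_def]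
    by (intro continuous_intros cF isCont_o2[OF _ cF])
  obtain d where d: "d > 0" "\<forall>h>0. h < d \<longrightarrow> \<phi> 0 < \<phi> (0 + h)"
    using DERIV_pos_inc_right[OF d\<phi>] assms(3) by auto
  have \<phi>0: "\<phi> 0 = 0" by (simp add: \<phi>_def F0)
  define B where "B = -(real k - 1) * artanh \<theta> + 1"
  have at: "artanh \<theta> \<le> 0" using artanh_mono[of \<theta> 0] assms by simp
  have "real k \<ge> 1"
  proof (rule ccontr)
    assume "\<not> real k \<ge> 1" then have "k = 0" by simp
    then have "\<theta> > 1" using assms(3) by simp
    then show False using assms(2) by simp
  qed
  then have "(real k - 1) * artanh \<theta> \<le> 0" using at by (intro mult_nonneg_nonpos) auto
  then have Bpos: "B > 0" unfolding B_def by linarith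
  have "\<phi> B < 0"
  proof -
    have t1: "0 \<le> tanh B" "tanh B \<le> 1" using tanh_real_bounds[of B] Bpos by auto
    have "\<theta> \<le> \<theta> * tanh B" using t1 assms by (simp add: mult_le_cancel_left1)
    moreover have "\<theta> * tanh B \<le> 0" using t1 assms by (simp add: mult_nonpos_nonneg)
    moreover have "-1 < \<theta> * tanh B" using calculation assms by linarith
    ultimately have b1: "artanh \<theta> \<le> F B" "F B \<le> 0" unfolding F_def f_ising_def
      using artanh_mono[of \<theta> "\<theta> * tanh B"] artanh_mono[of "\<theta> * tanh B" 0] assms by auto
    have "real k * F B \<le> 0" using b1 by (simp add: mult_nonneg_nonpos)
    then have "tanh (real k * F B) \<le> 0" by simp
    then have "0 \<le> \<theta> * tanh (real k * F B)" using assms by (simp add: mult_nonpos_nonpos)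
    moreover have "F (real k * F B) = artanh (\<theta> * tanh (real k * F B))" by (simp add: F_def f_ising_def)
    moreover have "\<theta> * tanh (real k * F B) < 1" using thtanh[OF ab, of "real k * F B"] by simp
    ultimately have b2: "0 \<le> F (real k * F B)"
      using artanh_mono[of 0 "\<theta> * tanh (real k * F B)"] by simp
    have "-(real k - 1) * F B \<le> -(real k - 1) * artanh \<theta>"
    proof -
      have "(real k - 1) * artanh \<theta> \<le> (real k - 1) * F B"
        using b1 \<open>real k \<ge> 1\<close> by (intro mult_left_mono) auto
      then show ?thesis by linarith
    qed
    then show ?thesis unfolding \<phi>_def using b2 B_def by linarith
  qed
  define e where "e = min (d/2) B"
  have e: "e > 0" "e < d" "e \<le> B" using d Bpos by (auto simp: e_def)
  have "\<phi> e > 0" using d(2) e \<phi>0 by auto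
  then obtain h where h: "e \<le> h" "h \<le> B" "\<phi> h = 0"
    using IVT2[of \<phi> B 0 e] \<open>\<phi> B < 0\<close> e c\<phi> by auto
  then show ?thesis using e unfolding \<phi>_def F_def by (intro exI[of _ h]) auto
qed


definition par :: "nat set \<Rightarrow> nat list \<Rightarrow> bool" where
  "par A x = even (\<Sum>i\<in>A. count_list x i)"

lemma H_iff: "x \<in> H_sub k A \<longleftrightarrow> x \<in> cayley_vertices k \<and> par A x"
  by (simp add: H_sub_def par_def letter_count_def)

lemma par_Nil: "par A []"
  by (simp add: par_def)

lemma par_snoc: "finite A \<Longrightarrow> par A (x @ [i]) \<longleftrightarrow> (par A x \<longleftrightarrow> i \<notin> A)"
proof -
  assume fA: "finite A"
  have pt: "count_list (x@[i]) a = count_list x a + (if i = a then 1 else 0)" for a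
    by simp
  have "(\<Sum>a\<in>A. count_list (x@[i]) a) = (\<Sum>a\<in>A. count_list x a) + (\<Sum>a\<in>A. if i = a then 1 else 0)"
    unfolding pt by (rule sum.distrib)
  also have "(\<Sum>a\<in>A. if i = a then 1 else 0::nat) = (if i \<in> A then 1 else 0)" using fA by simp
  finally show ?thesis unfolding par_def by auto
qed

lemma snoc_V:
  assumes "x \<in> cayley_vertices k" "i \<in> {1..k+1}" "x = [] \<or> i \<noteq> last x"
  shows "x @ [i] \<in> cayley_vertices k"
  unfolding cayley_vertices_def
proof (intro CollectI conjI allI impI)
  show "set (x@[i]) \<subseteq> {1..k+1}" using assms by (auto simp: cayley_vertices_def)
  fix m assume m: "Suc m < length (x@[i])"
  show "(x@[i]) ! m \<noteq> (x@[i]) ! Suc m"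
  proof (cases "Suc m < length x")
    case True then show ?thesis using assms(1) by (auto simp: cayley_vertices_def nth_append)
  next
    case False
    then have e: "Suc m = length x" using m by simp
    then have ne: "x \<noteq> []" by auto
    have "m = length x - 1" using e by simp
    then have "last x = x ! m" using ne by (simp add: last_conv_nth)
    then show ?thesis using e assms(3) ne by (simp add: nth_append)
  qed
qed

lemma butlast_V: "x \<in> cayley_vertices k \<Longrightarrow> butlast x \<in> cayley_vertices k"
  unfolding cayley_vertices_def by (auto simp: nth_butlast dest: in_set_butlastD)

definition valf :: "real \<Rightarrow> real \<Rightarrow> real \<Rightarrow> real \<Rightarrow> bool \<Rightarrow> bool \<Rightarrow> real" where
  "valf h1 h2 h3 h4 p q = (if p then (if q then h1 else h2) else (if q then h3 else h4))"

definition fld :: "nat \<Rightarrow> nat set \<Rightarrow> real \<Rightarrow> real \<Rightarrow> real \<Rightarrow> real \<Rightarrow> real \<Rightarrow> nat list \<Rightarrow> real" where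
  "fld k A \<theta> h1 h2 h3 h4 x = (if x \<notin> cayley_vertices k then 0
     else if x = [] then f_ising h1 \<theta> + real k * f_ising h3 \<theta>
     else valf h1 h2 h3 h4 (par A x) (par A (butlast x)))"

lemma fld_in:
  assumes A: "A \<subseteq> {1..k+1}" "card A = k" "k \<ge> 1"
    and e1: "h1 = real k * f_ising h3 \<theta>"
    and e2: "h2 = (real k - 1) * f_ising h3 \<theta> + f_ising h1 \<theta>"
    and e3: "h3 = (real k - 1) * f_ising h2 \<theta> + f_ising h4 \<theta>"
    and e4: "h4 = real k * f_ising h2 \<theta>"
  shows "fld k A \<theta> h1 h2 h3 h4 \<in> wp_gibbs_fields k A \<theta>"
proof -
  define F where "F h = f_ising h \<theta>" for h
  define h where "h = fld k A \<theta> h1 h2 h3 h4"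
  define G where "G P Q = F (valf h1 h2 h3 h4 P Q)" for P Q
  have fA: "finite A" using A(1) finite_subset by blast
  have "card ({1..k+1} - A) = 1" using A fA by (simp add: card_Diff_subset)
  then obtain j where j: "{1..k+1} - A = {j}" by (rule card_1_singletonE)
  have jj: "j \<in> {1..k+1} - A" by (simp only: j singletonI)
  have jU: "j \<in> {1..k+1}" "j \<notin> A" using DiffD1[OF jj] DiffD2[OF jj] by auto
  have UA: "i \<in> A" if iU: "i \<in> {1..k+1}" and ij: "i \<noteq> j" for i
  proof (rule ccontr)
    assume "i \<notin> A"
    then have "i \<in> {1..k+1} - A" using iU by (intro DiffI)
    then have "i \<in> {j}" by (simp only: j)
    then show False using ij by simp
  qed
  have cons: "h x = (\<Sum>y\<in>successors k x. F (h y))" if xV: "x \<in> cayley_vertices k" for x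
  proof -
    define S where "S = {i \<in> {1..k+1}. x = [] \<or> i \<noteq> last x}"
    have fS: "finite S" unfolding S_def by auto
    have succ: "successors k x = (\<lambda>i. x @ [i]) ` S" unfolding successors_def S_def by blast
    have inj: "inj_on (\<lambda>i. x@[i]) S" by (auto simp: inj_on_def)
    have hy: "h (x@[i]) = valf h1 h2 h3 h4 (par A x \<longleftrightarrow> i \<notin> A) (par A x)" if "i \<in> S" for i
    proof -
      have "x@[i] \<in> cayley_vertices k" using snoc_V[OF xV] that unfolding S_def by auto
      then show ?thesis by (simp add: h_def fld_def par_snoc[OF fA])
    qed
    have "(\<Sum>y\<in>successors k x. F (h y)) = (\<Sum>i\<in>S. F (h (x@[i])))"
      unfolding succ by (simp add: sum.reindex[OF inj])
    also have "\<dots> = (\<Sum>i\<in>S. G (par A x \<longleftrightarrow> i \<notin> A) (par A x))"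
      using hy unfolding G_def by (intro sum.cong) auto
    also have "\<dots> = (\<Sum>i\<in>S \<inter> A. G (par A x \<longleftrightarrow> i \<notin> A) (par A x)) + (\<Sum>i\<in>S - A. G (par A x \<longleftrightarrow> i \<notin> A) (par A x))"
      by (rule sum.Int_Diff[OF fS])
    also have "\<dots> = (\<Sum>i\<in>S \<inter> A. G (\<not> par A x) (par A x)) + (\<Sum>i\<in>S - A. G (par A x) (par A x))"
      by (intro arg_cong2[where f="(+)"] sum.cong) auto
    also have "\<dots> = real (card (S \<inter> A)) * G (\<not> par A x) (par A x) + real (card (S - A)) * G (par A x) (par A x)"
      by simp
    finally have sumeq: "(\<Sum>y\<in>successors k x. F (h y)) = real (card (S \<inter> A)) * G (\<not> par A x) (par A x) + real (card (S - A)) * G (par A x) (par A x)" .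
    show ?thesis
    proof (cases "x = []")
      case True
      then have "S = {1..k+1}" unfolding S_def by auto
      then have "S \<inter> A = A" "S - A = {j}" using A(1) by (blast, simp only: j)
      then show ?thesis using sumeq True xV A(2) par_Nil
        unfolding h_def fld_def G_def valf_def F_def by simp
    next
      case False
      define l where "l = last x"
      have lU: "l \<in> {1..k+1}" using xV False unfolding l_def cayley_vertices_def
        using last_in_set by blast
      have xe: "x = butlast x @ [l]" using False unfolding l_def by simp
      have Px: "par A x \<longleftrightarrow> (par A (butlast x) \<longleftrightarrow> l \<notin> A)"
        using par_snoc[OF fA, of "butlast x" l] xe by simp
      have hx: "h x = valf h1 h2 h3 h4 (par A x) (par A (butlast x))"
        using xV False unfolding h_def fld_def by simp
      show ?thesis
      proof (cases "l = j")
        case True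
        then have "S = A" unfolding S_def using False l_def A(1) jU UA by auto
        then have SA: "S \<inter> A = A" "card (S - A) = 0" by auto
        then have s1: "(\<Sum>y\<in>successors k x. F (h y)) = real k * G (\<not> par A x) (par A x)"
          using sumeq A(2) by (simp add: SA)
        show ?thesis
        proof (cases "par A x")
          case True
          then show ?thesis using s1 hx Px \<open>l = j\<close> jU e1 unfolding G_def valf_def F_def by simp
        next
          case False
          then show ?thesis using s1 hx Px \<open>l = j\<close> jU e4 unfolding G_def valf_def F_def by simp
        qed
      next
        case lj: False
        then have lA: "l \<in> A" using UA lU by auto
        have "S \<inter> A = A - {l}" unfolding S_def using False l_def A(1) by auto
        then have c1: "real (card (S \<inter> A)) = real k - 1" using lA A fA by simp
        have "S - A = {j}" unfolding S_def using False l_def jU lA UA by auto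
        then have s2: "(\<Sum>y\<in>successors k x. F (h y)) = (real k - 1) * G (\<not> par A x) (par A x) + G (par A x) (par A x)"
          using sumeq c1 by simp
        show ?thesis
        proof (cases "par A x")
          case True
          then show ?thesis using s2 hx Px lA e2 unfolding G_def valf_def F_def by simp
        next
          case False
          then show ?thesis using s2 hx Px lA e3 unfolding G_def valf_def F_def by simp
        qed
      qed
    qed
  qed
  have wp: "weakly_periodic k A h"
    unfolding weakly_periodic_def
  proof (intro exI ballI impI)
    fix x assume "x \<in> cayley_vertices k" "x \<noteq> []"
    then show "h x = (if x \<in> H_sub k A then (if pred_vertex x \<in> H_sub k A then h1 else h2)
               else (if pred_vertex x \<in> H_sub k A then h3 else h4))"
      using butlast_V[of x k] unfolding h_def fld_def H_iff pred_vertex_def valf_def by simp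
  qed
  have z: "\<forall>x. x \<notin> cayley_vertices k \<longrightarrow> h x = 0" unfolding h_def fld_def by simp
  have c: "consistent_field k \<theta> h"
    unfolding consistent_field_def
  proof
    fix x assume xV: "x \<in> cayley_vertices k"
    show "h x = (\<Sum>y\<in>successors k x. f_ising (h y) \<theta>)"
      using cons[OF xV] unfolding F_def .
  qed
  show ?thesis using z c wp unfolding wp_gibbs_fields_def h_def by blast
qed


lemma fld_at_single:
  assumes "a \<in> A" "a \<in> {1..k+1}" "finite A"
  shows "fld k A \<theta> h1 h2 h3 h4 [a] = h3"
proof -
  have V: "[] @ [a] \<in> cayley_vertices k"
    by (rule snoc_V) (use assms in \<open>auto simp: cayley_vertices_def\<close>)
  have "\<not> par A ([] @ [a])" using par_snoc[OF assms(3), of "[]" a] par_Nil assms(1) by simp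
  then show ?thesis using V par_Nil unfolding fld_def valf_def by simp
qed

theorem theorem4:
  fixes k :: nat and J \<beta> \<theta> \<alpha> :: real and A :: "nat set"
  assumes "\<beta> > 0"
    and "\<theta> = tanh (J * \<beta>)"
    and "\<alpha> = (1 - \<theta>) / (1 + \<theta>)"
    and "A \<subseteq> {1..k+1}" and "card A = k"
    and "k \<ge> 6" and "\<alpha> > 1"
  shows "(\<alpha> \<in> {(real k - 1 - sqrt (real k ^ 2 - 6 * real k + 1)) / 2 <..<
                (real k - 1 + sqrt (real k ^ 2 - 6 * real k + 1)) / 2} \<longrightarrow>
           (\<exists>h1 h2 h3. h1 \<in> wp_gibbs_fields k A \<theta> \<and> h2 \<in> wp_gibbs_fields k A \<theta> \<and>
                h3 \<in> wp_gibbs_fields k A \<theta> \<and> h1 \<noteq> h2 \<and> h1 \<noteq> h3 \<and> h2 \<noteq> h3))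
       \<and> (\<alpha> \<notin> {(real k - 1 - sqrt (real k ^ 2 - 6 * real k + 1)) / 2 <..<
                (real k - 1 + sqrt (real k ^ 2 - 6 * real k + 1)) / 2} \<longrightarrow>
           wp_gibbs_fields k A \<theta> \<noteq> {})"
proof -
  have tb: "-1 < \<theta>" "\<theta> < 1" using tanh_real_bounds[of "J*\<beta>"] assms(2) by auto
  have ab: "\<bar>\<theta>\<bar> < 1" using tb by auto
  have pos: "1 + \<theta> > 0" using tb by simp
  have aeq: "\<alpha> * (1 + \<theta>) = 1 - \<theta>" using assms(3) pos by simp
  have tneg: "\<theta> < 0"
  proof -
    have "1 * (1 + \<theta>) < \<alpha> * (1 + \<theta>)" using assms(7) pos by (intro mult_strict_right_mono) auto
    then show ?thesis using aeq by simp
  qed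
  have k1: "k \<ge> 1" using assms(6) by simp
  have fA: "finite A" using assms(4) finite_subset by blast
  have F0: "f_ising 0 \<theta> = 0" by (simp add: f_ising_def)
  have zero: "fld k A \<theta> 0 0 0 0 \<in> wp_gibbs_fields k A \<theta>"
    by (rule fld_in[OF assms(4,5) k1]) (simp_all add: F0)
  have part1: "\<exists>h1 h2 h3. h1 \<in> wp_gibbs_fields k A \<theta> \<and> h2 \<in> wp_gibbs_fields k A \<theta> \<and>
                h3 \<in> wp_gibbs_fields k A \<theta> \<and> h1 \<noteq> h2 \<and> h1 \<noteq> h3 \<and> h2 \<noteq> h3"
    if ain: "\<alpha> \<in> {(real k - 1 - sqrt (real k ^ 2 - 6 * real k + 1)) / 2 <..<
                (real k - 1 + sqrt (real k ^ 2 - 6 * real k + 1)) / 2}"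
  proof -
    define s where "s = sqrt (real k ^ 2 - 6 * real k + 1)"
    have "real k * (real k - 6) \<ge> 0" using assms(6) by simp
    then have nn: "real k ^ 2 - 6 * real k + 1 \<ge> 0" by (simp add: power2_eq_square algebra_simps)
    have s2: "s^2 = real k ^ 2 - 6 * real k + 1" unfolding s_def using nn by simp
    have l1: "\<alpha> - (real k - 1 - s) / 2 > 0" and l2: "\<alpha> - (real k - 1 + s) / 2 < 0"
      using ain unfolding s_def by auto
    have "(\<alpha> - (real k - 1 - s) / 2) * (\<alpha> - (real k - 1 + s) / 2) < 0"
      using l1 l2 by (rule mult_pos_neg)
    moreover have "(\<alpha> - (real k - 1 - s) / 2) * (\<alpha> - (real k - 1 + s) / 2)
        = \<alpha>^2 - (real k - 1) * \<alpha> + ((real k - 1)^2 - s^2) / 4"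
      by (simp add: field_simps power2_eq_square)
    ultimately have q: "\<alpha>^2 - (real k - 1) * \<alpha> + real k < 0"
      unfolding s2 by (simp add: power2_eq_square algebra_simps)
    have "(\<alpha>^2 - (real k - 1) * \<alpha> + real k) * (1 + \<theta>)^2
        = (\<alpha> * (1 + \<theta>))^2 - (real k - 1) * (\<alpha> * (1 + \<theta>)) * (1 + \<theta>) + real k * (1 + \<theta>)^2"
      by (simp add: power2_eq_square algebra_simps)
    also have "\<dots> = 2 * (1 + (real k - 1) * \<theta> + real k * \<theta>^2)"
      unfolding aeq by (simp add: power2_eq_square algebra_simps)
    finally have id: "(\<alpha>^2 - (real k - 1) * \<alpha> + real k) * (1 + \<theta>)^2 = 2 * (1 + (real k - 1) * \<theta> + real k * \<theta>^2)" .
    have "(\<alpha>^2 - (real k - 1) * \<alpha> + real k) * (1 + \<theta>)^2 < 0"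
      using q pos by (intro mult_neg_pos) auto
    then have "2 * (1 + (real k - 1) * \<theta> + real k * \<theta>^2) < 0" unfolding id .
    then have "1 + (real k - 1) * \<theta> + real k * \<theta>^2 < 0" by simp
    then have cond: "-(real k - 1)*\<theta> - real k*\<theta>^2 > 1" by (simp add: algebra_simps)
    obtain hs where hs: "hs > 0" "hs = -(real k - 1) * f_ising hs \<theta> - f_ising (real k * f_ising hs \<theta>) \<theta>"
      using fp_exists[OF tb(1) tneg cond] by blast
    define c where "c = f_ising hs \<theta>"
    have odd: "\<And>h. f_ising (-h) \<theta> = - f_ising h \<theta>" using F_odd[OF ab] by blast
    have hs': "hs = -(real k - 1) * c - f_ising (real k * c) \<theta>" using hs(2) unfolding c_def .
    have cs: "f_ising hs \<theta> = c" unfolding c_def ..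
    have o1: "f_ising (-hs) \<theta> = -c" using odd[of hs] unfolding cs .
    have o2: "f_ising (- real k * c) \<theta> = - f_ising (real k * c) \<theta>" using odd[of "real k * c"] by simp
    have q1: "- real k * c = real k * f_ising (- hs) \<theta>" unfolding o1 by simp
    have q2: "hs = (real k - 1) * f_ising (- hs) \<theta> + f_ising (- real k * c) \<theta>"
      unfolding o1 o2 using hs' by (simp add: algebra_simps)
    have q3: "- hs = (real k - 1) * f_ising hs \<theta> + f_ising (real k * c) \<theta>"
      unfolding cs using hs' by (simp add: algebra_simps)
    have q4: "real k * c = real k * f_ising hs \<theta>" unfolding cs ..
    have sol1: "fld k A \<theta> (- real k * c) hs (-hs) (real k * c) \<in> wp_gibbs_fields k A \<theta>"
      by (rule fld_in[OF assms(4,5) k1 q1 q2 q3 q4])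
    have sol2: "fld k A \<theta> (real k * c) (-hs) hs (- real k * c) \<in> wp_gibbs_fields k A \<theta>"
      by (rule fld_in[OF assms(4,5) k1 q4 q3 q2 q1])
    have "A \<noteq> {}" using assms(5,6) by auto
    then obtain a where aA: "a \<in> A" by auto
    have aU: "a \<in> {1..k+1}" using aA assms(4) by auto
    have v0: "fld k A \<theta> 0 0 0 0 [a] = 0" using fld_at_single[OF aA aU fA] .
    have v1: "fld k A \<theta> (- real k * c) hs (-hs) (real k * c) [a] = -hs" using fld_at_single[OF aA aU fA] .
    have v2: "fld k A \<theta> (real k * c) (-hs) hs (- real k * c) [a] = hs" using fld_at_single[OF aA aU fA] .
    define g0 where "g0 = fld k A \<theta> 0 0 0 0"
    define g1 where "g1 = fld k A \<theta> (- real k * c) hs (-hs) (real k * c)"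
    define g2 where "g2 = fld k A \<theta> (real k * c) (-hs) hs (- real k * c)"
    have d1: "g0 \<noteq> g1"
    proof
      assume "g0 = g1" then have "g0 [a] = g1 [a]" by simp
      then show False using v0 v1 hs(1) unfolding g0_def g1_def by simp
    qed
    have d2: "g0 \<noteq> g2"
    proof
      assume "g0 = g2" then have "g0 [a] = g2 [a]" by simp
      then show False using v0 v2 hs(1) unfolding g0_def g2_def by simp
    qed
    have d3: "g1 \<noteq> g2"
    proof
      assume "g1 = g2" then have "g1 [a] = g2 [a]" by simp
      then show False using v1 v2 hs(1) unfolding g1_def g2_def by simp
    qed
    show ?thesis using zero sol1 sol2 d1 d2 d3 unfolding g0_def g1_def g2_def by blast
  qed
  show ?thesis using part1 zero by blast
qed

end
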